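(* Any Koebe inner function belonging to $\mathsf{R}^{1/2}$ must be constant.
   Context: $\mathbb{D}$ is the open unit disk, $\mathbb{T}$ the unit circle. The Smirnov class is $N^+ = \{f/g : f,g \in H^\infty,\ g \text{ outer}\}$; $\mathsf{R}^+$ is the set of $f\in N^+$ whose radial boundary values are real a.e.~on $\mathbb{T}$, and $\mathsf{R}^{1/2} = \mathsf{R}^+\cap H^{1/2}$. A Koebe inner function is a function of the form $K\circ\phi$, where $\phi$ is an inner function and $K(z) = -4z/(1-z)^2$. *)

theory Defs
  imports "HOL-Analysis.Analysis"
begin

abbreviation unit_disc :: "complex set" where
  "unit_disc \<equiv> ball 0 1"

definition H_inf :: "(complex \<Rightarrow> complex) \<Rightarrow> bool" where
  "H_inf f \<longleftrightarrow> f holomorphic_on unit_disc \<and> bounded (f ` unit_disc)"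

definition radial_limit :: "(complex \<Rightarrow> complex) \<Rightarrow> real \<Rightarrow> complex \<Rightarrow> bool" where
  "radial_limit f \<theta> L \<longleftrightarrow> ((\<lambda>r. f (complex_of_real r * cis \<theta>)) \<longlongrightarrow> L) (at_left 1)"

definition inner_fun :: "(complex \<Rightarrow> complex) \<Rightarrow> bool" where
  "inner_fun f \<longleftrightarrow> H_inf f \<and>
     (AE \<theta> in lborel. \<theta> \<in> {0..2*pi} \<longrightarrow> (\<exists>L. radial_limit f \<theta> L \<and> norm L = 1))"

definition outer_fun :: "(complex \<Rightarrow> complex) \<Rightarrow> bool" where
  "outer_fun g \<longleftrightarrow> (\<exists>c u. norm c = 1 \<and> set_integrable lborel {0..2*pi} (u :: real \<Rightarrow> real) \<and>
     (\<forall>z\<in>unit_disc. g z = c * exp (complex_of_real (1 / (2*pi)) *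
        (LINT t:{0..2*pi}|lborel. ((cis t + z) / (cis t - z)) * complex_of_real (u t)))))"

definition smirnov :: "(complex \<Rightarrow> complex) \<Rightarrow> bool" where
  "smirnov f \<longleftrightarrow> (\<exists>F G. H_inf F \<and> H_inf G \<and> outer_fun G \<and> (\<forall>z\<in>unit_disc. f z = F z / G z))"

definition R_plus :: "(complex \<Rightarrow> complex) \<Rightarrow> bool" where
  "R_plus f \<longleftrightarrow> smirnov f \<and>
     (AE \<theta> in lborel. \<theta> \<in> {0..2*pi} \<longrightarrow> (\<exists>L. radial_limit f \<theta> L \<and> L \<in> \<real>))"

definition hardy :: "real \<Rightarrow> (complex \<Rightarrow> complex) \<Rightarrow> bool" where
  "hardy p f \<longleftrightarrow> f holomorphic_on unit_disc \<and>
     (\<exists>M. \<forall>r\<in>{0<..<1}. (LINT t:{0..2*pi}|lborel. norm (f (complex_of_real r * cis t)) powr p) \<le> M)"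

definition R_half :: "(complex \<Rightarrow> complex) \<Rightarrow> bool" where
  "R_half f \<longleftrightarrow> R_plus f \<and> hardy (1/2) f"

definition koebe :: "complex \<Rightarrow> complex" where
  "koebe z = - 4 * z / (1 - z)\<^sup>2"

end

theory Submission
  imports Defs "HOL-Complex_Analysis.Complex_Analysis"
begin


lemma cis_int_integral:
  fixes k :: int
  shows "(LINT t:{0..2*pi}|lborel. cis (of_int k * t)) = (if k = 0 then 2*pi else 0)"
proof (cases "k = 0")
  case True
  then show ?thesis by (simp add: set_lebesgue_integral_def scaleR_conv_of_real)
next
  case False
  let ?F = "\<lambda>t. cis (of_int k * t) / (\<i> * of_int k)"
  have d: "(?F has_vector_derivative cis (of_int k * t)) (at t within {0..2*pi})" for t
  proof -
    have "((\<lambda>t. cis (of_int k * t)) has_derivative (\<lambda>h. (of_int k * h) *\<^sub>R (\<i> * cis (of_int k * t)))) (at t within {0..2*pi})"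
      by (auto intro!: derivative_eq_intros)
    then have "((\<lambda>t. cis (of_int k * t)) has_vector_derivative (of_int k * (\<i> * cis (of_int k * t)))) (at t within {0..2*pi})"
      by (simp add: has_vector_derivative_def scaleR_conv_of_real algebra_simps)
    then have "(?F has_vector_derivative (of_int k * (\<i> * cis (of_int k * t))) / (\<i> * of_int k)) (at t within {0..2*pi})"
      by (rule has_vector_derivative_divide)
    then show ?thesis using False by (simp add: field_simps)
  qed
  have "integral\<^sup>L lborel (\<lambda>x. indicator {0..2*pi} x *\<^sub>R cis (of_int k * x)) = ?F (2*pi) - ?F 0"
    by (rule integral_FTC_atLeastAtMost) (auto intro!: d continuous_intros)
  also have "?F (2*pi) = ?F 0"
  proof -
    have "cis (of_int k * (2*pi)) = 1"
      by (metis cis_multiple_2pi Ints_of_int mult.commute mult.left_commute)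
    then show ?thesis by simp
  qed
  finally show ?thesis using False by (simp add: set_lebesgue_integral_def)
qed

lemma set_integral_sum_circ:
  fixes f :: "nat \<Rightarrow> real \<Rightarrow> 'b::{banach, second_countable_topology}"
  assumes "\<And>i. i \<in> I \<Longrightarrow> set_integrable lborel A (f i)"
  shows "(LINT t:A|lborel. (\<Sum>i\<in>I. f i t)) = (\<Sum>i\<in>I. LINT t:A|lborel. f i t)"
  using assms unfolding set_lebesgue_integral_def set_integrable_def
  by (simp add: scaleR_sum_right integral_sum)

lemma cis_integrable: "set_integrable lborel {0..2*pi} (\<lambda>t. c * cis (a * t))"
  by (rule borel_integrable_atLeastAtMost') (auto intro!: continuous_intros)

lemma finite_parseval:
  fixes c :: "nat \<Rightarrow> complex"
  shows "(LINT t:{0..2*pi}|lborel. (cmod (\<Sum>n<M. c n * cis (real n * t)))^2) = 2*pi * (\<Sum>n<M. (cmod (c n))^2)"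
proof -
  have eq: "complex_of_real ((cmod (\<Sum>n<M. c n * cis (real n * t)))^2) =
     (\<Sum>n<M. \<Sum>m<M. c n * cnj (c m) * cis (of_int (int n - int m) * t))" for t
  proof -
    have "complex_of_real ((cmod (\<Sum>n<M. c n * cis (real n * t)))^2)
       = (\<Sum>n<M. c n * cis (real n * t)) * cnj (\<Sum>n<M. c n * cis (real n * t))"
      by (rule complex_norm_square)
    also have "\<dots> = (\<Sum>n<M. \<Sum>m<M. (c n * cis (real n * t)) * (cnj (c m) * cis (- (real m * t))))"
      by (simp add: cnj_sum sum_product cis_cnj)
    also have "\<dots> = (\<Sum>n<M. \<Sum>m<M. c n * cnj (c m) * cis (of_int (int n - int m) * t))"
      by (intro sum.cong refl) (simp add: cis_mult algebra_simps)
    finally show ?thesis .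
  qed
  have "complex_of_real (LINT t:{0..2*pi}|lborel. (cmod (\<Sum>n<M. c n * cis (real n * t)))^2)
     = (LINT t:{0..2*pi}|lborel. complex_of_real ((cmod (\<Sum>n<M. c n * cis (real n * t)))^2))"
    by (rule set_integral_complex_of_real[symmetric])
  also have "\<dots> = (LINT t:{0..2*pi}|lborel. (\<Sum>n<M. \<Sum>m<M. c n * cnj (c m) * cis (of_int (int n - int m) * t)))"
    by (simp only: eq)
  also have "\<dots> = (\<Sum>n<M. \<Sum>m<M. LINT t:{0..2*pi}|lborel. c n * cnj (c m) * cis (of_int (int n - int m) * t))"
  proof -
    have int1: "set_integrable lborel {0..2*pi} (\<lambda>t. \<Sum>m<M. c n * cnj (c m) * cis (of_int (int n - int m) * t))" for n
      by (rule borel_integrable_atLeastAtMost') (intro continuous_intros)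
    show ?thesis
      apply (subst set_integral_sum_circ[OF int1])
      apply (intro sum.cong refl)
      apply (subst set_integral_sum_circ[OF cis_integrable])
      apply simp
      done
  qed
  also have "\<dots> = (\<Sum>n<M. \<Sum>m<M. c n * cnj (c m) * (if int n - int m = 0 then 2*pi else 0))"
    by (simp add: cis_int_integral del: of_int_diff)
  also have "\<dots> = (\<Sum>n<M. c n * cnj (c n) * (2*pi))"
    by (simp add: if_distrib cong: if_cong)
  also have "\<dots> = complex_of_real (2*pi * (\<Sum>n<M. (cmod (c n))^2))"
    by (simp add: complex_norm_square sum_distrib_left mult.commute flip: of_real_power)
  finally show ?thesis by (simp only: of_real_eq_iff)
qed

lemma dct_circ:
  fixes F :: "nat \<Rightarrow> real \<Rightarrow> 'b::{banach,second_countable_topology}"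
  assumes contF: "\<And>i. continuous_on {0..2*pi} (F i)" and contG: "continuous_on {0..2*pi} G"
    and lim: "AE t in lborel. t \<in> {0..2*pi} \<longrightarrow> (\<lambda>i. F i t) \<longlonglongrightarrow> G t"
    and bnd: "\<And>i t. t \<in> {0..2*pi} \<Longrightarrow> norm (F i t) \<le> B"
  shows "(\<lambda>i. LINT t:{0..2*pi}|lborel. F i t) \<longlonglongrightarrow> (LINT t:{0..2*pi}|lborel. G t)"
  unfolding set_lebesgue_integral_def
proof (rule integral_dominated_convergence[where w = "\<lambda>t. indicator {0..2*pi} t * B"])
  show "(\<lambda>t. indicator {0..2*pi} t *\<^sub>R G t) \<in> borel_measurable lborel"
    using borel_integrable_atLeastAtMost'[OF contG] unfolding set_integrable_def
    by (rule borel_measurable_integrable)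
  show "(\<lambda>t. indicator {0..2*pi} t *\<^sub>R F i t) \<in> borel_measurable lborel" for i
    using borel_integrable_atLeastAtMost'[OF contF] unfolding set_integrable_def
    by (rule borel_measurable_integrable)
  show "integrable lborel (\<lambda>t. indicator {0..2*pi} t * B)"
    using borel_integrable_atLeastAtMost'[of 0 "2*pi" "\<lambda>_. B"] unfolding set_integrable_def
    by simp
  show "AE t in lborel. (\<lambda>i. indicator {0..2*pi} t *\<^sub>R F i t) \<longlonglongrightarrow> indicator {0..2*pi} t *\<^sub>R G t"
    using lim by eventually_elim (auto split: split_indicator)
  show "AE t in lborel. norm (indicator {0..2*pi} t *\<^sub>R F i t) \<le> indicator {0..2*pi} t * B" for i
    by (intro AE_I2) (auto split: split_indicator intro: bnd)
qed

lemma powser_circle: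
  fixes c :: "nat \<Rightarrow> complex"
  assumes sums: "\<And>w. w \<in> ball 0 1 \<Longrightarrow> (\<lambda>n. c n * w^n) sums f w"
    and cont: "continuous_on (ball 0 1) f" and r: "0 \<le> r" "r < 1"
  shows "(\<lambda>n. (cmod (c n))^2 * r^(2*n)) sums ((LINT t:{0..2*pi}|lborel. (cmod (f (r * cis t)))^2) / (2*pi))"
    and "(LINT t:{0..2*pi}|lborel. f (r * cis t)) = 2*pi * c 0"
proof -
  define S where "S M t = (\<Sum>n<M. (c n * of_real r ^ n) * cis (real n * t))" for M t
  have S_eq: "S M t = (\<Sum>n<M. c n * (of_real r * cis t) ^ n)" for M t
    unfolding S_def by (intro sum.cong refl) (simp only: power_mult_distrib Complex.DeMoivre mult.assoc)
  have inball: "of_real r * cis t \<in> ball 0 1" for t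
    using r by (simp add: norm_mult)
  have limS: "(\<lambda>M. S M t) \<longlonglongrightarrow> f (of_real r * cis t)" for t
    using sums[OF inball] unfolding sums_def S_eq by simp
  define x where "x = complex_of_real ((1 + r) / 2)"
  have nx: "norm x = (1 + r) / 2" unfolding x_def norm_of_real using r by simp
  have "x \<in> ball 0 1" using r nx by simp
  then have "summable (\<lambda>n. c n * x ^ n)" using sums by (auto simp: sums_iff)
  then have summA: "summable (\<lambda>n. norm (c n * complex_of_real r ^ n))"
    by (rule powser_insidea) (use r nx in simp)
  define A where "A = (\<Sum>n. norm (c n * complex_of_real r ^ n))"
  have bndS: "norm (S M t) \<le> A" for M t
  proof -
    have "norm (S M t) \<le> (\<Sum>n<M. norm (c n * complex_of_real r ^ n * cis (real n * t)))"
      unfolding S_def by (rule norm_sum)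
    also have "\<dots> = (\<Sum>n<M. norm (c n * complex_of_real r ^ n))"
      by (simp add: norm_mult)
    also have "\<dots> \<le> A" unfolding A_def
      by (rule sum_le_suminf[OF summA]) auto
    finally show ?thesis .
  qed
  have contS: "continuous_on {0..2*pi} (S M)" for M
    unfolding S_def by (intro continuous_intros)
  have contf: "continuous_on {0..2*pi} (\<lambda>t. f (of_real r * cis t))"
    by (rule continuous_on_compose2[OF cont]) (use inball in \<open>auto intro!: continuous_intros\<close>)
  have "(\<lambda>M. LINT t:{0..2*pi}|lborel. (cmod (S M t))^2) \<longlonglongrightarrow> (LINT t:{0..2*pi}|lborel. (cmod (f (of_real r * cis t)))^2)"
  proof (rule dct_circ[where B = "A^2"])
    show "continuous_on {0..2*pi} (\<lambda>t. (cmod (S i t))^2)" for i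
      by (intro continuous_intros contS)
    show "continuous_on {0..2*pi} (\<lambda>t. (cmod (f (of_real r * cis t)))^2)"
      by (intro continuous_intros contf)
    show "AE t in lborel. t \<in> {0..2*pi} \<longrightarrow> (\<lambda>i. (cmod (S i t))^2) \<longlonglongrightarrow> (cmod (f (of_real r * cis t)))^2"
      by (intro AE_I2 impI tendsto_intros limS)
    show "norm ((cmod (S i t))^2) \<le> A^2" for i t
      using bndS[of i t] by (simp add: power_mono)
  qed
  moreover have "(LINT t:{0..2*pi}|lborel. (cmod (S M t))^2) = 2*pi * (\<Sum>n<M. (cmod (c n))^2 * r^(2*n))" for M
    unfolding S_def using r
    by (subst finite_parseval) (simp add: norm_mult norm_power power_mult_distrib power_mult abs_of_nonneg mult.commute flip: power_mult)
  ultimately have "(\<lambda>M. 2*pi * (\<Sum>n<M. (cmod (c n))^2 * r^(2*n))) \<longlonglongrightarrow> (LINT t:{0..2*pi}|lborel. (cmod (f (of_real r * cis t)))^2)"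
    by simp
  then have "(\<lambda>M. (2*pi * (\<Sum>n<M. (cmod (c n))^2 * r^(2*n))) / (2*pi)) \<longlonglongrightarrow> (LINT t:{0..2*pi}|lborel. (cmod (f (of_real r * cis t)))^2) / (2*pi)"
    by (intro tendsto_divide tendsto_const) auto
  then show "(\<lambda>n. (cmod (c n))^2 * r^(2*n)) sums ((LINT t:{0..2*pi}|lborel. (cmod (f (r * cis t)))^2) / (2*pi))"
    unfolding sums_def by simp
  have "(\<lambda>M. LINT t:{0..2*pi}|lborel. S M t) \<longlonglongrightarrow> (LINT t:{0..2*pi}|lborel. f (of_real r * cis t))"
    by (rule dct_circ[where B = A]) (auto intro: contS contf limS bndS)
  moreover have "(LINT t:{0..2*pi}|lborel. S M t) = (if M = 0 then 0 else 2*pi * c 0)" for M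
  proof -
    have "(LINT t:{0..2*pi}|lborel. S M t) = (\<Sum>n<M. LINT t:{0..2*pi}|lborel. (c n * of_real r ^ n) * cis (real n * t))"
      unfolding S_def by (rule set_integral_sum_circ) (rule cis_integrable)
    also have "\<dots> = (\<Sum>n<M. (c n * of_real r ^ n) * (if n = 0 then 2*pi else 0))"
      using cis_int_integral[of "int n" for n] by simp
    also have "\<dots> = (if M = 0 then 0 else 2*pi * c 0)"
      by (simp add: if_distrib cong: if_cong)
    finally show ?thesis .
  qed
  ultimately have "(\<lambda>M. if M = 0 then 0 else 2*pi * c 0) \<longlonglongrightarrow> (LINT t:{0..2*pi}|lborel. f (of_real r * cis t))"
    by simp
  moreover have "(\<lambda>M. if M = 0 then 0 else 2*pi * c 0) \<longlonglongrightarrow> 2*pi * c 0"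
    by (rule tendsto_eventually) (auto simp: eventually_sequentially intro!: exI[of _ 1])
  ultimately show "(LINT t:{0..2*pi}|lborel. f (r * cis t)) = 2*pi * c 0"
    using LIMSEQ_unique by blast
qed



definition rs :: "nat \<Rightarrow> real" where "rs j = 1 - inverse (real (Suc (Suc j)))"

lemma rs_pos: "0 < rs j" and rs_less: "rs j < 1"
  by (auto simp: rs_def field_simps)

lemma rs_lim: "rs \<longlonglongrightarrow> 1"
proof -
  have "(\<lambda>j. inverse (real (Suc (Suc j)))) \<longlonglongrightarrow> 0"
    using LIMSEQ_Suc[OF LIMSEQ_inverse_real_of_nat] .
  then have "(\<lambda>j. 1 - inverse (real (Suc (Suc j)))) \<longlonglongrightarrow> 1 - 0"
    by (intro tendsto_diff tendsto_const)
  then show ?thesis by (simp add: rs_def[abs_def])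
qed

lemma rs_filterlim: "filterlim rs (at_left 1) sequentially"
proof -
  have "\<forall>j. rs j \<in> {..<1} \<and> rs j \<noteq> 1" using rs_less by (auto simp: less_imp_neq)
  then have "eventually (\<lambda>j. rs j \<in> {..<1} \<and> rs j \<noteq> 1) sequentially"
    by (rule always_eventually)
  then show ?thesis unfolding filterlim_at using rs_lim by auto
qed

lemma rs_eventually_ge:
  assumes "q < 1"
  shows "eventually (\<lambda>j. q \<le> rs j) sequentially"
proof -
  have "eventually (\<lambda>j. q < rs j) sequentially" using order_tendstoD(1)[OF rs_lim assms] .
  then show ?thesis by eventually_elim simp
qed

lemma taylor_sums:
  assumes "f holomorphic_on ball 0 1" "w \<in> ball 0 1"
  shows "(\<lambda>n. ((deriv ^^ n) f 0 / fact n) * w ^ n) sums f w"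
  using holomorphic_power_series[OF assms] by simp

lemma coef_bound:
  fixes a :: "nat \<Rightarrow> real"
  assumes nn: "\<And>n. 0 \<le> a n" and s: "\<And>j. (\<lambda>n. a n * rs j ^ (2*n)) sums S j" and b: "\<And>j. S j \<le> C"
  shows "summable a" "suminf a \<le> C"
proof -
  have part: "(\<Sum>n<M. a n) \<le> C" for M
  proof -
    have le: "(\<Sum>n<M. a n * rs j ^ (2*n)) \<le> C" for j
    proof -
      have "(\<Sum>n<M. a n * rs j ^ (2*n)) \<le> S j"
        using sum_le_suminf[OF sums_summable[OF s[of j]], of "{..<M}"] sums_unique[OF s[of j]] nn rs_pos[of j]
        by (auto intro: mult_nonneg_nonneg less_imp_le)
      then show ?thesis using b[of j] by linarith
    qed
    have "(\<lambda>j. \<Sum>n<M. a n * rs j ^ (2*n)) \<longlonglongrightarrow> (\<Sum>n<M. a n * 1 ^ (2*n))"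
      by (intro tendsto_intros rs_lim)
    then show ?thesis using le by (simp add: LIMSEQ_le_const2)
  qed
  show "summable a" using part nn by (intro summableI_nonneg_bounded) auto
  then show "suminf a \<le> C" using part by (rule suminf_le_const)
qed

lemma pointwise_bound:
  fixes c :: "nat \<Rightarrow> complex"
  assumes s: "(\<lambda>n. c n * z^n) sums fz"
    and X: "(\<lambda>n. (cmod (c n))^2 * r^(2*n)) sums X"
    and z: "norm z \<le> q * r" and q: "0 \<le> q" "q < 1" and r: "0 < r"
  shows "norm fz \<le> (X + 1 / (1 - q^2)) / 2"
proof -
  have geo: "(\<lambda>n. (q^2)^n) sums (1 / (1 - q^2))"
  proof (rule geometric_sums)
    have "q^2 < 1" using q by (simp add: power_less_one_iff)
    moreover have "0 \<le> q^2" by simp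
    ultimately show "norm (q^2) < 1" by simp
  qed
  have tot: "(\<lambda>n. ((cmod (c n))^2 * r^(2*n) + (q^2)^n) / 2) sums ((X + 1 / (1 - q^2)) / 2)"
    by (intro sums_divide sums_add X geo)
  have trm: "norm (c n * z^n) \<le> ((cmod (c n))^2 * r^(2*n) + (q^2)^n) / 2" for n
  proof -
    have "norm (c n * z^n) = cmod (c n) * norm z ^ n" by (simp add: norm_mult norm_power)
    also have "\<dots> \<le> cmod (c n) * (q * r) ^ n"
      by (intro mult_left_mono power_mono z) auto
    also have "\<dots> = (cmod (c n) * r^n) * q^n" by (simp add: power_mult_distrib)
    also have "\<dots> \<le> ((cmod (c n) * r^n)^2 + (q^n)^2) / 2"
      using sum_squares_bound[of "cmod (c n) * r^n" "q^n"] by (simp add: field_simps)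
    also have "\<dots> = ((cmod (c n))^2 * r^(2*n) + (q^2)^n) / 2"
      by (simp add: power_mult_distrib power_mult[symmetric] mult.commute)
    finally show ?thesis .
  qed
  have sn: "summable (\<lambda>n. norm (c n * z^n))"
    by (rule summable_comparison_test[OF _ sums_summable[OF tot]]) (use trm in auto)
  have "norm fz = norm (\<Sum>n. c n * z^n)" using sums_unique[OF s] by simp
  also have "\<dots> \<le> (\<Sum>n. norm (c n * z^n))" by (rule summable_norm[OF sn])
  also have "\<dots> \<le> (\<Sum>n. ((cmod (c n))^2 * r^(2*n) + (q^2)^n) / 2)"
    by (rule suminf_le[OF trm sn sums_summable[OF tot]])
  also have "\<dots> = (X + 1 / (1 - q^2)) / 2" using sums_unique[OF tot] by simp
  finally show ?thesis .
qed



lemma radial_seq: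
  assumes "radial_limit f t L"
  shows "(\<lambda>j. f (complex_of_real (rs j) * cis t)) \<longlonglongrightarrow> L"
  using filterlim_compose[OF assms[unfolded radial_limit_def] rs_filterlim] by (simp add: o_def)

lemma inner_le1:
  assumes inn: "inner_fun \<phi>" and z: "z \<in> ball 0 1"
  shows "norm (\<phi> z) \<le> 1"
proof (rule ccontr)
  assume "\<not> norm (\<phi> z) \<le> 1"
  then have gt: "norm (\<phi> z) > 1" by simp
  have hol: "\<phi> holomorphic_on ball 0 1" and bd: "bounded (\<phi> ` ball 0 1)"
    using inn by (auto simp: inner_fun_def H_inf_def)
  obtain M where M: "M > 0" "\<And>w. w \<in> ball 0 1 \<Longrightarrow> norm (\<phi> w) \<le> M"
    using bd by (auto simp: bounded_pos)
  have AEL: "AE t in lborel. t \<in> {0..2*pi} \<longrightarrow> (\<exists>L. radial_limit \<phi> t L \<and> norm L = 1)"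
    using inn by (simp add: inner_fun_def)
  define q where "q = (1 + norm z) / 2"
  have q: "0 \<le> q" "q < 1" "norm z < q" using z by (auto simp: q_def)
  define Y where "Y = 1 / (1 - q^2)"
  have inball: "complex_of_real (rs j) * cis t \<in> ball 0 1" for j t
    using rs_pos[of j] rs_less[of j] by (simp add: norm_mult)
  have powbound: "norm (\<phi> z) ^ k \<le> (1 + Y) / 2" for k
  proof -
    define \<psi> where "\<psi> w = \<phi> w ^ k" for w
    have holp: "\<psi> holomorphic_on ball 0 1" unfolding \<psi>_def[abs_def] by (intro holomorphic_intros hol)
    define c where "c n = (deriv ^^ n) \<psi> 0 / fact n" for n
    have s: "\<And>w. w \<in> ball 0 1 \<Longrightarrow> (\<lambda>n. c n * w ^ n) sums \<psi> w"
      unfolding c_def by (rule taylor_sums[OF holp])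
    have contp: "continuous_on (ball 0 1) \<psi>" using holp by (rule holomorphic_on_imp_continuous_on)
    define X where "X j = (LINT t:{0..2*pi}|lborel. (cmod (\<psi> (rs j * cis t)))^2) / (2*pi)" for j
    have Xs: "(\<lambda>n. (cmod (c n))^2 * rs j^(2*n)) sums X j" for j
      unfolding X_def by (rule powser_circle(1)[OF s contp]) (use rs_pos[of j] rs_less[of j] in auto)
    have "(\<lambda>j. LINT t:{0..2*pi}|lborel. (cmod (\<psi> (rs j * cis t)))^2) \<longlonglongrightarrow> (LINT t:{0..2*pi}|lborel. (1::real))"
    proof (rule dct_circ[where B = "(M^k)^2"])
      show "continuous_on {0..2*pi} (\<lambda>t. (cmod (\<psi> (complex_of_real (rs i) * cis t)))\<^sup>2)" for i
        by (intro continuous_intros continuous_on_compose2[OF contp]) (use inball in auto)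
      show "continuous_on {0..2*pi} (\<lambda>t. 1::real)" by simp
      show "AE t in lborel. t \<in> {0..2*pi} \<longrightarrow> (\<lambda>i. (cmod (\<psi> (complex_of_real (rs i) * cis t)))\<^sup>2) \<longlonglongrightarrow> 1"
        using AEL
      proof eventually_elim
        case (elim t)
        show ?case
        proof
          assume "t \<in> {0..2*pi}"
          then obtain L where L: "radial_limit \<phi> t L" "norm L = 1" using elim by auto
          have "(\<lambda>i. (cmod (\<psi> (complex_of_real (rs i) * cis t)))\<^sup>2) \<longlonglongrightarrow> (cmod (L ^ k))^2"
            unfolding \<psi>_def by (intro tendsto_intros radial_seq L(1))
          then show "(\<lambda>i. (cmod (\<psi> (complex_of_real (rs i) * cis t)))\<^sup>2) \<longlonglongrightarrow> 1"
            using L(2) by (simp add: norm_power)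
        qed
      qed
      show "norm ((cmod (\<psi> (complex_of_real (rs i) * cis t)))\<^sup>2) \<le> (M ^ k)\<^sup>2" for i t
        unfolding \<psi>_def using M(2)[OF inball[of i t]]
        by (simp add: norm_power power_mono)
    qed
    moreover have "(LINT t:{0..2*pi}|lborel. (1::real)) = 2*pi"
      by (simp add: set_lebesgue_integral_def)
    ultimately have "(\<lambda>j. X j) \<longlonglongrightarrow> 2*pi / (2*pi)"
      unfolding X_def by (intro tendsto_divide tendsto_const) auto
    then have Xlim: "X \<longlonglongrightarrow> 1" by simp
    have ev: "eventually (\<lambda>j. norm (z / q) \<le> rs j) sequentially"
      using q by (intro rs_eventually_ge) (simp add: norm_divide divide_less_eq)
    have "eventually (\<lambda>j. norm (\<psi> z) \<le> (X j + Y) / 2) sequentially"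
      using ev
    proof eventually_elim
      case (elim j)
      have "norm z \<le> q * rs j"
        using elim q norm_ge_zero[of z] by (simp add: norm_divide divide_le_eq mult.commute)
      then show ?case unfolding Y_def
        by (rule pointwise_bound[OF s[OF z] Xs _ q(1,2) rs_pos])
    qed
    moreover have "(\<lambda>j. (X j + Y) / 2) \<longlonglongrightarrow> (1 + Y) / 2"
      by (intro tendsto_intros Xlim) simp
    ultimately have "norm (\<psi> z) \<le> (1 + Y) / 2"
      by (intro tendsto_le[OF trivial_limit_sequentially _ tendsto_const]) auto
    then show ?thesis by (simp add: \<psi>_def norm_power)
  qed
  obtain k where "(1 + Y) / 2 < norm (\<phi> z) ^ k"
    using real_arch_pow[OF gt] by blast
  with powbound[of k] show False by simp
qed



lemma re_h: "Re ((1+w)/(1-w)) = (1 - (cmod w)^2) / (cmod (1-w))^2"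
proof -
  have "Re ((1+w)/(1-w)) = (Re (1+w) * Re (1-w) + Im (1+w) * Im (1-w)) / (cmod (1-w))^2"
    by (rule Re_divide')
  also have "Re (1+w) * Re (1-w) + Im (1+w) * Im (1-w) = 1 - (cmod w)^2"
    using cmod_power2[of w] by (simp add: algebra_simps power2_eq_square)
  finally show ?thesis .
qed

lemma koebe_h: "w \<noteq> 1 \<Longrightarrow> ((1+w)/(1-w))^2 = 1 - koebe w"
  by (simp add: koebe_def divide_simps) (simp add: algebra_simps power2_eq_square)

lemma koebe_mult: "w \<noteq> 1 \<Longrightarrow> koebe w * (1-w)^2 = -4*w"
  by (simp add: koebe_def)

lemma set_integral_Re:
  assumes "set_integrable M A f"
  shows "(LINT x:A|M. Re (f x)) = Re (LINT x:A|M. f x)"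
proof -
  have "(LINT x:A|M. Re (f x)) = integral\<^sup>L M (\<lambda>x. Re (indicator A x *\<^sub>R f x))"
    unfolding set_lebesgue_integral_def by simp
  also have "\<dots> = Re (integral\<^sup>L M (\<lambda>x. indicator A x *\<^sub>R f x))"
    using assms unfolding set_integrable_def by (rule integral_bounded_linear[OF bounded_linear_Re])
  finally show ?thesis unfolding set_lebesgue_integral_def .
qed

lemma nonconst_lt1:
  assumes hol: "\<phi> holomorphic_on ball 0 1" and le: "\<And>z. z \<in> ball 0 1 \<Longrightarrow> norm (\<phi> z) \<le> 1"
    and nc: "\<not> \<phi> constant_on ball 0 1" and z: "z \<in> ball 0 1"
  shows "norm (\<phi> z) < 1"
proof -
  have "open (\<phi> ` ball 0 1)"
    by (rule open_mapping_thm[OF hol]) (use nc in auto)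
  moreover have "\<phi> ` ball 0 1 \<subseteq> cball 0 1" using le by auto
  ultimately have "\<phi> ` ball 0 1 \<subseteq> interior (cball 0 1)" using interior_maximal by blast
  then show ?thesis using z by (auto simp: image_subset_iff)
qed



lemma cont_circ:
  assumes "continuous_on (ball 0 1) F"
  shows "continuous_on {0..2*pi} (\<lambda>t. F (complex_of_real (rs j) * cis t))"
proof -
  have inball: "complex_of_real (rs j) * cis t \<in> ball 0 1" for t
    using rs_pos[of j] rs_less[of j] by (simp add: norm_mult)
  show ?thesis
    by (rule continuous_on_compose2[OF assms]) (use inball in \<open>auto intro!: continuous_intros\<close>)
qed

lemma main_contra:
  assumes hol: "\<phi> holomorphic_on ball 0 1"
    and lt1: "\<And>z. z \<in> ball 0 1 \<Longrightarrow> norm (\<phi> z) < 1"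
    and AEin: "AE t in lborel. t \<in> {0..2*pi} \<longrightarrow> (\<exists>L. radial_limit \<phi> t L \<and> norm L = 1)"
    and AEK: "AE t in lborel. t \<in> {0..2*pi} \<longrightarrow> (\<exists>L. radial_limit (koebe \<circ> \<phi>) t L \<and> L \<in> \<real>)"
    and hardy: "hardy (1/2) (koebe \<circ> \<phi>)"
  shows False
proof -
  have inball: "complex_of_real (rs j) * cis t \<in> ball 0 1" for j t
    using rs_pos[of j] rs_less[of j] by (simp add: norm_mult)
  have ne1: "\<phi> z \<noteq> 1" if "z \<in> ball 0 1" for z
    using lt1[OF that] by auto
  define h where "h z = (1 + \<phi> z) / (1 - \<phi> z)" for z
  have holh: "h holomorphic_on ball 0 1"
    unfolding h_def[abs_def] by (intro holomorphic_intros hol) (use ne1 in auto)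
  have conth: "continuous_on (ball 0 1) h" using holh by (rule holomorphic_on_imp_continuous_on)
  have reh: "Re (h z) > 0" if z: "z \<in> ball 0 1" for z
  proof -
    have "Re (h z) = (1 - (cmod (\<phi> z))^2) / (cmod (1 - \<phi> z))^2"
      unfolding h_def by (rule re_h)
    moreover have "(cmod (\<phi> z))^2 < 1" using lt1[OF z] by (simp add: power_less_one_iff)
    moreover have "cmod (1 - \<phi> z) > 0" using ne1[OF z] by simp
    ultimately show ?thesis by simp
  qed
  define g where "g z = csqrt (h z)" for z
  have holg: "g holomorphic_on ball 0 1"
    unfolding g_def[abs_def]
  proof (rule holomorphic_on_csqrt'[OF holh])
    fix z :: complex assume "z \<in> ball 0 1"
    from reh[OF this] show "h z \<notin> \<real>\<^sub>\<le>\<^sub>0" by (auto simp: complex_nonpos_Reals_iff)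
  qed
  have contg: "continuous_on (ball 0 1) g" using holg by (rule holomorphic_on_imp_continuous_on)
  have ng: "(norm (g z))^2 = norm (h z)" for z by (simp add: g_def)
  have holK: "(koebe \<circ> \<phi>) holomorphic_on ball 0 1" using hardy by (simp add: hardy_def)
  have contK: "continuous_on (ball 0 1) (koebe \<circ> \<phi>)" using holK by (rule holomorphic_on_imp_continuous_on)
  have hK: "norm (h z) \<le> 1 + sqrt (norm (koebe (\<phi> z)))" if z: "z \<in> ball 0 1" for z
  proof -
    have "(norm (h z))^2 = norm ((h z)^2)" by (simp add: norm_power)
    also have "\<dots> = norm (1 - koebe (\<phi> z))" unfolding h_def by (simp add: koebe_h[OF ne1[OF z]])
    also have "\<dots> \<le> 1 + norm (koebe (\<phi> z))" by (rule order_trans[OF norm_triangle_ineq4]) simp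
    also have "\<dots> \<le> (1 + sqrt (norm (koebe (\<phi> z))))^2"
      by (simp add: power2_sum)
    finally show ?thesis by (rule power2_le_imp_le) simp
  qed
  obtain Mh where Mh: "\<And>r. r \<in> {0<..<1} \<Longrightarrow> (LINT t:{0..2*pi}|lborel. norm ((koebe \<circ> \<phi>) (complex_of_real r * cis t)) powr (1/2)) \<le> Mh"
    using hardy unfolding hardy_def by blast
  define b where "b n = (deriv ^^ n) g 0 / fact n" for n
  have sg: "\<And>w. w \<in> ball 0 1 \<Longrightarrow> (\<lambda>n. b n * w ^ n) sums g w"
    unfolding b_def by (rule taylor_sums[OF holg])
  define Xg where "Xg j = (LINT t:{0..2*pi}|lborel. (cmod (g (rs j * cis t)))^2) / (2*pi)" for j
  have Xgs: "(\<lambda>n. (cmod (b n))^2 * rs j^(2*n)) sums Xg j" for j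
    unfolding Xg_def by (rule powser_circle(1)[OF sg contg]) (use rs_pos[of j] rs_less[of j] in auto)
  have Xgb: "Xg j \<le> (2*pi + Mh) / (2*pi)" for j
  proof -
    have hKr: "cmod (h (complex_of_real (rs j) * cis t)) \<le> 1 + sqrt (cmod ((koebe \<circ> \<phi>) (complex_of_real (rs j) * cis t)))" for t
      using hK[OF inball[of j t]] by simp
    have "(LINT t:{0..2*pi}|lborel. (cmod (g (rs j * cis t)))^2) = (LINT t:{0..2*pi}|lborel. cmod (h (rs j * cis t)))"
      by (simp add: ng)
    also have "\<dots> \<le> (LINT t:{0..2*pi}|lborel. 1 + sqrt (norm ((koebe \<circ> \<phi>) (rs j * cis t))))"
      by (rule set_integral_mono)
         (auto intro!: borel_integrable_atLeastAtMost' continuous_intros cont_circ conth contK hKr simp del: o_apply)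
    also have "\<dots> = 2*pi + (LINT t:{0..2*pi}|lborel. norm ((koebe \<circ> \<phi>) (rs j * cis t)) powr (1/2))"
      by (subst set_integral_add)
         (auto intro!: borel_integrable_atLeastAtMost' continuous_intros cont_circ contK simp: powr_half_sqrt set_lebesgue_integral_def simp del: o_apply)
    also have "\<dots> \<le> 2*pi + Mh"
      using Mh[of "rs j"] rs_pos[of j] rs_less[of j] by simp
    finally show ?thesis unfolding Xg_def by (simp add: divide_right_mono)
  qed
  have sumb: "summable (\<lambda>n. (cmod (b n))^2)" and Sbb: "(\<Sum>n. (cmod (b n))^2) \<le> (2*pi + Mh) / (2*pi)"
    using coef_bound[OF _ Xgs Xgb] by auto
  define Sb where "Sb = (\<Sum>n. (cmod (b n))^2)"
  have AEu: "AE t in lborel. t \<in> {0..2*pi} \<longrightarrow> (\<lambda>j. Re (h (rs j * cis t))) \<longlonglongrightarrow> 0"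
    using AEin AEK
  proof eventually_elim
    case (elim t)
    show ?case
    proof
      assume t: "t \<in> {0..2*pi}"
      obtain L where L: "radial_limit \<phi> t L" "norm L = 1" using elim t by auto
      obtain L' where L': "radial_limit (koebe \<circ> \<phi>) t L'" using elim t by auto
      have \<phi>l: "(\<lambda>j. \<phi> (rs j * cis t)) \<longlonglongrightarrow> L" by (rule radial_seq[OF L(1)])
      have Kl: "(\<lambda>j. (koebe \<circ> \<phi>) (rs j * cis t)) \<longlonglongrightarrow> L'" by (rule radial_seq[OF L'])
      have "L \<noteq> 1"
      proof
        assume L1: "L = 1"
        have "(\<lambda>j. (koebe \<circ> \<phi>) (rs j * cis t) * (1 - \<phi> (rs j * cis t))^2) \<longlonglongrightarrow> L' * (1 - L)^2"
          by (intro tendsto_intros Kl \<phi>l)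
        moreover have "(\<lambda>j. (koebe \<circ> \<phi>) (rs j * cis t) * (1 - \<phi> (rs j * cis t))^2) = (\<lambda>j. -4 * \<phi> (rs j * cis t))"
        proof
          fix j
          show "(koebe \<circ> \<phi>) (rs j * cis t) * (1 - \<phi> (rs j * cis t))^2 = -4 * \<phi> (rs j * cis t)"
            using koebe_mult[OF ne1[OF inball[of j t]]] by simp
        qed
        moreover have "(\<lambda>j. -4 * \<phi> (rs j * cis t)) \<longlonglongrightarrow> -4 * L" by (intro tendsto_intros \<phi>l)
        ultimately have "L' * (1-L)^2 = -4 * L" using LIMSEQ_unique by metis
        with L1 show False by simp
      qed
      have "(\<lambda>j. Re (h (rs j * cis t))) \<longlonglongrightarrow> Re ((1 + L)/(1 - L))"
        unfolding h_def using \<open>L \<noteq> 1\<close> by (intro tendsto_intros \<phi>l) auto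
      moreover have "Re ((1 + L)/(1 - L)) = 0" using re_h[of L] L(2) by simp
      ultimately show "(\<lambda>j. Re (h (rs j * cis t))) \<longlonglongrightarrow> 0" by simp
    qed
  qed
  define ch where "ch n = (deriv ^^ n) h 0 / fact n" for n
  have sh: "\<And>w. w \<in> ball 0 1 \<Longrightarrow> (\<lambda>n. ch n * w ^ n) sums h w"
    unfolding ch_def by (rule taylor_sums[OF holh])
  have mean: "(LINT t:{0..2*pi}|lborel. Re (h (rs j * cis t))) = 2*pi * Re (h 0)" for j
  proof -
    have "(LINT t:{0..2*pi}|lborel. h (rs j * cis t)) = 2*pi * ch 0"
      by (rule powser_circle(2)[OF sh conth]) (use rs_pos[of j] rs_less[of j] in auto)
    then show ?thesis
      by (subst set_integral_Re) (auto intro!: borel_integrable_atLeastAtMost' cont_circ conth simp: ch_def)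
  qed
  have h0: "Re (h 0) > 0" using reh[of 0] by simp
  have key: "2*pi * Re (h 0) \<le> 4*pi * (Sb - (\<Sum>n<N. (cmod (b n))^2))" for N
  proof -
    define d where "d n = (if n < N then 0 else b n)" for n
    define p where "p z = (\<Sum>n<N. b n * z^n)" for z
    define e where "e z = g z - p z" for z
    have se: "(\<lambda>n. d n * w^n) sums e w" if w: "w \<in> ball 0 1" for w
    proof -
      have "(\<lambda>n. if n < N then b n * w^n else 0) sums (\<Sum>n\<in>{..<N}. if n < N then b n * w^n else 0)"
        by (rule sums_finite) auto
      then have pf: "(\<lambda>n. if n < N then b n * w^n else 0) sums p w" by (simp add: p_def)
      have "(\<lambda>n. b n * w^n - (if n < N then b n * w^n else 0)) sums (g w - p w)"
        by (rule sums_diff[OF sg[OF w] pf])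
      moreover have "(\<lambda>n. b n * w^n - (if n < N then b n * w^n else 0)) = (\<lambda>n. d n * w^n)"
        by (auto simp: d_def)
      ultimately show ?thesis by (simp add: e_def)
    qed
    have conte: "continuous_on (ball 0 1) e"
      unfolding e_def[abs_def] p_def by (intro continuous_intros contg)
    define \<tau> where "\<tau> = Sb - (\<Sum>n<N. (cmod (b n))^2)"
    have dsum: "(\<lambda>n. (cmod (d n))^2) sums \<tau>"
    proof -
      have "(\<lambda>n. if n < N then (cmod (b n))^2 else 0) sums (\<Sum>n\<in>{..<N}. if n < N then (cmod (b n))^2 else 0)"
        by (rule sums_finite) auto
      then have pf: "(\<lambda>n. if n < N then (cmod (b n))^2 else 0) sums (\<Sum>n<N. (cmod (b n))^2)" by simp
      have "(\<lambda>n. (cmod (b n))^2 - (if n < N then (cmod (b n))^2 else 0)) sums (Sb - (\<Sum>n<N. (cmod (b n))^2))"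
        by (rule sums_diff[OF _ pf]) (use sumb in \<open>simp add: Sb_def summable_sums\<close>)
      moreover have "(\<lambda>n. (cmod (b n))^2 - (if n < N then (cmod (b n))^2 else 0)) = (\<lambda>n. (cmod (d n))^2)"
        by (auto simp: d_def)
      ultimately show ?thesis by (simp add: \<tau>_def)
    qed
    define BN where "BN = (\<Sum>n<N. cmod (b n))"
    have BN0: "BN \<ge> 0" unfolding BN_def by (intro sum_nonneg) auto
    have pb: "norm (p z) \<le> BN" if z: "z \<in> ball 0 1" for z
    proof -
      have "norm (p z) \<le> (\<Sum>n<N. norm (b n * z^n))" unfolding p_def by (rule norm_sum)
      also have "\<dots> \<le> (\<Sum>n<N. cmod (b n))"
      proof (rule sum_mono)
        fix n
        have "norm z ^ n \<le> 1" using z by (intro power_le_one) auto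
        then show "norm (b n * z^n) \<le> cmod (b n)"
          by (simp add: norm_mult norm_power mult_left_le)
      qed
      finally show ?thesis by (simp add: BN_def)
    qed
    have pt: "Re (h z) \<le> 2 * (cmod (e z))^2 + min (Re (h z)) (2 * BN^2)" if z: "z \<in> ball 0 1" for z
    proof -
      have "Re (h z) \<le> cmod (h z)" by (rule complex_Re_le_cmod)
      also have "\<dots> = (cmod (e z + p z))^2" using ng[of z] by (simp add: e_def)
      also have "\<dots> \<le> (cmod (e z) + cmod (p z))^2"
        by (intro power_mono norm_triangle_ineq) auto
      also have "\<dots> \<le> 2 * (cmod (e z))^2 + 2 * (cmod (p z))^2"
        using sum_squares_bound[of "cmod (e z)" "cmod (p z)"] by (simp add: power2_sum)
      also have "\<dots> \<le> 2 * (cmod (e z))^2 + 2 * BN^2"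
        using pb[OF z] by (simp add: power_mono)
      finally have a: "Re (h z) \<le> 2 * (cmod (e z))^2 + 2 * BN^2" .
      show ?thesis using a by (auto simp: min_def)
    qed
    define I where "I j = (LINT t:{0..2*pi}|lborel. min (Re (h (rs j * cis t))) (2 * BN^2))" for j
    have ineq: "2*pi * Re (h 0) \<le> 4*pi*\<tau> + I j" for j
    proof -
      have Es: "(\<lambda>n. (cmod (d n))^2 * rs j^(2*n)) sums ((LINT t:{0..2*pi}|lborel. (cmod (e (rs j * cis t)))^2) / (2*pi))"
        by (rule powser_circle(1)[OF se conte]) (use rs_pos[of j] rs_less[of j] in auto)
      have "(LINT t:{0..2*pi}|lborel. (cmod (e (rs j * cis t)))^2) / (2*pi) \<le> \<tau>"
      proof (rule sums_le[OF _ Es dsum])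
        fix n
        have "rs j ^ (2*n) \<le> 1" using rs_pos[of j] rs_less[of j] by (intro power_le_one) auto
        then show "(cmod (d n))^2 * rs j^(2*n) \<le> (cmod (d n))^2"
          by (simp add: mult_left_le)
      qed
      then have Ele: "(LINT t:{0..2*pi}|lborel. (cmod (e (rs j * cis t)))^2) \<le> 2*pi*\<tau>"
        by (simp add: divide_le_eq mult.commute)
      have "2*pi * Re (h 0) = (LINT t:{0..2*pi}|lborel. Re (h (rs j * cis t)))" using mean[of j] by simp
      also have "\<dots> \<le> (LINT t:{0..2*pi}|lborel. 2 * (cmod (e (rs j * cis t)))^2 + min (Re (h (rs j * cis t))) (2 * BN^2))"
        by (rule set_integral_mono)
           (auto intro!: borel_integrable_atLeastAtMost' continuous_intros cont_circ conth conte pt inball)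
      also have "\<dots> = 2 * (LINT t:{0..2*pi}|lborel. (cmod (e (rs j * cis t)))^2) + I j"
        unfolding I_def
        by (subst set_integral_add)
           (auto intro!: borel_integrable_atLeastAtMost' continuous_intros cont_circ conth conte)
      also have "\<dots> \<le> 4*pi*\<tau> + I j" using Ele by simp
      finally show ?thesis .
    qed
    have Ilim: "I \<longlonglongrightarrow> (LINT t:{0..2*pi}|lborel. (0::real))"
      unfolding I_def
    proof (rule dct_circ[where B = "2 * BN^2"])
      show "continuous_on {0..2*pi} (\<lambda>t. min (Re (h (complex_of_real (rs i) * cis t))) (2 * BN\<^sup>2))" for i
        by (intro continuous_intros cont_circ conth)
      show "continuous_on {0..2*pi} (\<lambda>t. 0::real)" by simp
      show "AE t in lborel. t \<in> {0..2*pi} \<longrightarrow> (\<lambda>i. min (Re (h (complex_of_real (rs i) * cis t))) (2 * BN\<^sup>2)) \<longlonglongrightarrow> 0"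
        using AEu
      proof eventually_elim
        case (elim t)
        show ?case
        proof
          assume "t \<in> {0..2*pi}"
          then have "(\<lambda>i. min (Re (h (complex_of_real (rs i) * cis t))) (2 * BN\<^sup>2)) \<longlonglongrightarrow> min 0 (2 * BN^2)"
            using elim by (intro tendsto_min tendsto_const) auto
          then show "(\<lambda>i. min (Re (h (complex_of_real (rs i) * cis t))) (2 * BN\<^sup>2)) \<longlonglongrightarrow> 0"
            using BN0 by simp
        qed
      qed
      show "norm (min (Re (h (complex_of_real (rs i) * cis t))) (2 * BN\<^sup>2)) \<le> 2 * BN\<^sup>2" for i t
        using reh[OF inball[of i t]] BN0 by auto
    qed
    then have "I \<longlonglongrightarrow> 0" by (simp add: set_lebesgue_integral_def)
    then have "(\<lambda>j. 4*pi*\<tau> + I j) \<longlonglongrightarrow> 4*pi*\<tau> + 0" by (intro tendsto_intros)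
    then have "2*pi * Re (h 0) \<le> 4*pi*\<tau> + 0"
      by (rule tendsto_lowerbound) (use ineq in \<open>auto intro: always_eventually\<close>)
    then show ?thesis by (simp add: \<tau>_def)
  qed
  have "(\<lambda>N. 4*pi * (Sb - (\<Sum>n<N. (cmod (b n))^2))) \<longlonglongrightarrow> 4*pi * (Sb - Sb)"
    by (intro tendsto_intros) (use summable_LIMSEQ[OF sumb] in \<open>simp add: Sb_def\<close>)
  then have "2*pi * Re (h 0) \<le> 4*pi * (Sb - Sb)"
    by (rule tendsto_lowerbound) (use key in \<open>auto intro: always_eventually\<close>)
  then show False using h0 pi_gt_zero by (simp add: mult_le_0_iff)
qed


theorem corollary3p8:
  fixes \<phi> :: "complex \<Rightarrow> complex"
  assumes "inner_fun \<phi>"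
    and "R_half (koebe \<circ> \<phi>)"
  shows "\<exists>c. \<forall>z\<in>unit_disc. (koebe \<circ> \<phi>) z = c"
proof (cases "\<phi> constant_on ball 0 1")
  case True
  then obtain c where c: "\<And>z. z \<in> ball 0 1 \<Longrightarrow> \<phi> z = c" unfolding constant_on_def by blast
  show ?thesis by (rule exI[of _ "koebe c"]) (simp add: c)
next
  case False
  have hol: "\<phi> holomorphic_on ball 0 1" using assms(1) by (simp add: inner_fun_def H_inf_def)
  have lt1: "\<And>z. z \<in> ball 0 1 \<Longrightarrow> norm (\<phi> z) < 1"
    by (rule nonconst_lt1[OF hol inner_le1[OF assms(1)] False])
  have AEin: "AE t in lborel. t \<in> {0..2*pi} \<longrightarrow> (\<exists>L. radial_limit \<phi> t L \<and> norm L = 1)"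
    using assms(1) by (simp add: inner_fun_def)
  have AEK: "AE t in lborel. t \<in> {0..2*pi} \<longrightarrow> (\<exists>L. radial_limit (koebe \<circ> \<phi>) t L \<and> L \<in> \<real>)"
    using assms(2) by (simp add: R_half_def R_plus_def)
  have hardy: "hardy (1/2) (koebe \<circ> \<phi>)" using assms(2) by (simp add: R_half_def)
  from main_contra[OF hol lt1 AEin AEK hardy] show ?thesis ..
qed

end
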